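(* Let $(X,\le)$ be a globally hyperbolic poset. Then $X$, equipped with its interval topology, is a locally compact Hausdorff space. Moreover: (i) the Lawson topology of $X$ is contained in the interval topology; (ii) the partial order $\le$ is a closed subset of $X\times X$ (with the product of the interval topologies); (iii) every directed subset of $X$ that has an upper bound has a supremum; (iv) every filtered subset of $X$ that has a lower bound has an infimum.
   Context: For a poset $(P,\sqsubseteq)$: a nonempty $S\subseteq P$ is directed if any two elements of $S$ have an upper bound in $S$, and filtered if any two elements of $S$ have a lower bound in $S$; $\bigsqcup S$ and $\bigwedge S$ denote the supremum and infimum of $S$ when they exist. Write $\uparrow F=\{y:\exists x\in F,\ x\sqsubseteq y\}$. For $x,y\in P$, $x\ll y$ iff for every directed $S\subseteq P$ that has a supremum, $y\sqsubseteq\bigsqcup S$ implies $x\sqsubseteq s$ for some $s\in S$. Put $\Downarrow x=\{a: a\ll x\}$ and $\Uparrow x=\{a: x\ll a\}$. A basis of $P$ is a subset $B$ such that for every $x$, $B\cap\Downarrow x$ contains a directed set with supremum $x$; $P$ is continuous if it has a basis. A continuous poset $P$ is bicontinuous if (1) for all $x,y\in P$: $x\ll y$ iff for every filtered $S\subseteq P$ having an infimum, $\bigwedge S\sqsubseteq x$ implies $s\sqsubseteq y$ for some $s\in S$; and (2) for every $x$, $\Uparrow x$ is filtered with infimum $x$. On a bicontinuous poset the sets $(a,b)=\{x: a\ll x\ll b\}$ form a basis for a topology, called the interval topology. The Lawson topology on a continuous poset $P$ is the topology with basis all sets $\Uparrow x\setminus\uparrow F$ with $x\in P$ and $F\subseteq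 P$ finite. A globally hyperbolic poset is a bicontinuous poset $(X,\le)$ such that every closed interval $[a,b]=\{x: a\le x\le b\}$ is compact in the interval topology. *)

theory Defs
  imports "HOL-Analysis.Analysis"
begin

text \<open>Posets are modelled by a type of class order; the poset X is the whole type.\<close>

definition directed :: "'a::order set \<Rightarrow> bool" where
  "directed S \<longleftrightarrow> S \<noteq> {} \<and> (\<forall>x\<in>S. \<forall>y\<in>S. \<exists>z\<in>S. x \<le> z \<and> y \<le> z)"

definition filtered :: "'a::order set \<Rightarrow> bool" where
  "filtered S \<longleftrightarrow> S \<noteq> {} \<and> (\<forall>x\<in>S. \<forall>y\<in>S. \<exists>z\<in>S. z \<le> x \<and> z \<le> y)"

definition is_sup :: "'a::order set \<Rightarrow> 'a \<Rightarrow> bool" where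
  "is_sup S x \<longleftrightarrow> (\<forall>s\<in>S. s \<le> x) \<and> (\<forall>u. (\<forall>s\<in>S. s \<le> u) \<longrightarrow> x \<le> u)"

definition is_inf :: "'a::order set \<Rightarrow> 'a \<Rightarrow> bool" where
  "is_inf S x \<longleftrightarrow> (\<forall>s\<in>S. x \<le> s) \<and> (\<forall>u. (\<forall>s\<in>S. u \<le> s) \<longrightarrow> u \<le> x)"

definition way_below :: "'a::order \<Rightarrow> 'a \<Rightarrow> bool" (infix "\<lless>" 50) where
  "x \<lless> y \<longleftrightarrow> (\<forall>S. directed S \<longrightarrow> (\<forall>l. is_sup S l \<longrightarrow> y \<le> l \<longrightarrow> (\<exists>s\<in>S. x \<le> s)))"

definition ddown :: "'a::order \<Rightarrow> 'a set" where
  "ddown x = {a. a \<lless> x}"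

definition uup :: "'a::order \<Rightarrow> 'a set" where
  "uup x = {a. x \<lless> a}"

definition upset :: "'a::order set \<Rightarrow> 'a set" where
  "upset F = {y. \<exists>x\<in>F. x \<le> y}"

definition is_basis :: "'a::order set \<Rightarrow> bool" where
  "is_basis B \<longleftrightarrow> (\<forall>x. \<exists>S. S \<subseteq> B \<inter> ddown x \<and> directed S \<and> is_sup S x)"

definition continuous_poset :: "'a::order itself \<Rightarrow> bool" where
  "continuous_poset _ \<longleftrightarrow> (\<exists>B::'a set. is_basis B)"

definition bicontinuous :: "'a::order itself \<Rightarrow> bool" where
  "bicontinuous _ \<longleftrightarrow> continuous_poset TYPE('a)
     \<and> (\<forall>x y::'a. x \<lless> y \<longleftrightarrow>
          (\<forall>S. filtered S \<longrightarrow> (\<forall>m. is_inf S m \<longrightarrow> m \<le> x \<longrightarrow> (\<exists>s\<in>S. s \<le> y))))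
     \<and> (\<forall>x::'a. filtered (uup x) \<and> is_inf (uup x) x)"

definition interval_topology :: "'a::order topology" where
  "interval_topology = topology_generated_by {{x. a \<lless> x \<and> x \<lless> b} | a b. True}"

definition lawson_topology :: "'a::order topology" where
  "lawson_topology = topology_generated_by {uup x - upset F | x F. finite F}"

definition globally_hyperbolic :: "'a::order itself \<Rightarrow> bool" where
  "globally_hyperbolic _ \<longleftrightarrow> bicontinuous TYPE('a)
     \<and> (\<forall>a b::'a. compactin interval_topology {a..b})"

end

theory Submission
  imports Defs
begin

lemma wb_le: "(x::'a::order) \<lless> y \<Longrightarrow> x \<le> y"
proof -
  assume "x \<lless> y"
  moreover have "directed {y}" by (simp add: directed_def)
  moreover have "is_sup {y} y" by (simp add: is_sup_def)
  ultimately show ?thesis unfolding way_below_def by blast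
qed

lemma wb_mono: "(a::'a::order) \<le> x \<Longrightarrow> x \<lless> y \<Longrightarrow> y \<le> b \<Longrightarrow> a \<lless> b"
  unfolding way_below_def by (meson order_trans)

lemma wb_mono_l: "(a::'a::order) \<le> x \<Longrightarrow> x \<lless> y \<Longrightarrow> a \<lless> y"
  using wb_mono by blast

lemma box_up: "(z::'a::order) \<lless> b \<Longrightarrow> \<not> s \<le> b \<Longrightarrow> \<not> s \<le> z"
  by (meson wb_le order_trans)

lemma box_down: "(a::'a::order) \<lless> z \<Longrightarrow> \<not> a \<le> v \<Longrightarrow> \<not> z \<le> v"
  by (meson wb_le order_trans)

lemma box_both: "(a::'a::order) \<lless> u \<Longrightarrow> v \<lless> b \<Longrightarrow> u \<le> v \<Longrightarrow> a \<le> b"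
  by (meson wb_le order_trans)

lemma gh_bc: "globally_hyperbolic TYPE('a::order) \<Longrightarrow> bicontinuous TYPE('a)"
  unfolding globally_hyperbolic_def by (rule conjunct1)

lemma gh_cpt: "globally_hyperbolic TYPE('a::order) \<Longrightarrow> compactin interval_topology {a..b::'a}"
  unfolding globally_hyperbolic_def by blast

lemma cont_dir:
  assumes "bicontinuous TYPE('a::order)"
  shows "\<exists>S. S \<subseteq> ddown (x::'a) \<and> directed S \<and> is_sup S x"
proof -
  have "continuous_poset TYPE('a)" using assms unfolding bicontinuous_def by (rule conjunct1)
  then obtain B :: "'a set" where "is_basis B" unfolding continuous_poset_def by (rule exE)
  then obtain S where "S \<subseteq> B \<inter> ddown x \<and> directed S \<and> is_sup S x" unfolding is_basis_def by blast
  then show ?thesis by blast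
qed

lemma C1:
  assumes "bicontinuous TYPE('a::order)" "\<not> (y::'a) \<le> v"
  shows "\<exists>a. a \<lless> y \<and> \<not> a \<le> v"
proof -
  obtain S where S: "S \<subseteq> ddown y" "directed S" "is_sup S y" using cont_dir[OF assms(1)] by blast
  have "\<exists>s\<in>S. \<not> s \<le> v" using S(3) assms(2) unfolding is_sup_def by blast
  then show ?thesis using S(1) unfolding ddown_def by blast
qed

lemma C1':
  assumes "bicontinuous TYPE('a::order)"
  shows "\<exists>a. a \<lless> (y::'a)"
proof -
  obtain S where S: "S \<subseteq> ddown y" "directed S" "is_sup S y" using cont_dir[OF assms(1)] by blast
  then obtain s where "s \<in> S" unfolding directed_def by blast
  then show ?thesis using S(1) unfolding ddown_def by blast
qed

lemma C3:
  assumes "bicontinuous TYPE('a::order)" "(x::'a) \<lless> y"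
  shows "\<exists>a. x \<le> a \<and> a \<lless> y"
proof -
  obtain S where S: "S \<subseteq> ddown y" "directed S" "is_sup S y" using cont_dir[OF assms(1)] by blast
  then obtain s where "s \<in> S" "x \<le> s" using assms(2) unfolding way_below_def by blast
  then show ?thesis using S(1) unfolding ddown_def by blast
qed

lemma C2:
  assumes "bicontinuous TYPE('a::order)" "\<not> (s::'a) \<le> y"
  shows "\<exists>b. y \<lless> b \<and> \<not> s \<le> b"
proof -
  have "\<forall>x::'a. filtered (uup x) \<and> is_inf (uup x) x" using assms(1) unfolding bicontinuous_def by (elim conjE)
  then have "is_inf (uup y) y" by blast
  then show ?thesis using assms(2) unfolding is_inf_def uup_def by blast
qed

lemma C2':
  assumes "bicontinuous TYPE('a::order)"
  shows "\<exists>b. (y::'a) \<lless> b"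
proof -
  have "\<forall>x::'a. filtered (uup x) \<and> is_inf (uup x) x" using assms(1) unfolding bicontinuous_def by (elim conjE)
  then have "filtered (uup y)" by blast
  then show ?thesis unfolding filtered_def uup_def by blast
qed

lemma interval_open: "openin interval_topology {x. a \<lless> x \<and> x \<lless> b}"
  unfolding interval_topology_def by (rule topology_generated_by_Basis) blast

lemma open_crit:
  assumes "\<forall>y\<in>U. \<exists>a b. a \<lless> y \<and> y \<lless> b \<and> {z. a \<lless> z \<and> z \<lless> b} \<subseteq> U"
  shows "openin interval_topology U"
  unfolding openin_subopen[of _ U]
proof
  fix y assume "y \<in> U"
  then obtain a b where "a \<lless> y \<and> y \<lless> b \<and> {z. a \<lless> z \<and> z \<lless> b} \<subseteq> U" using assms by blast
  then show "\<exists>T. openin interval_topology T \<and> y \<in> T \<and> T \<subseteq> U" using interval_open by blast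
qed

lemma topspace_int:
  assumes "bicontinuous TYPE('a::order)"
  shows "topspace (interval_topology :: 'a topology) = UNIV"
proof -
  have "(y::'a) \<in> \<Union>{{x. a \<lless> x \<and> x \<lless> b} | a b. True}" for y
  proof -
    obtain a where a: "a \<lless> y" using C1'[OF assms] by blast
    obtain b where b: "y \<lless> b" using C2'[OF assms] by blast
    have "{x. a \<lless> x \<and> x \<lless> b} \<in> {{x. a \<lless> x \<and> x \<lless> b} | a b. True}" by blast
    moreover have "y \<in> {x. a \<lless> x \<and> x \<lless> b}" using a b by simp
    ultimately show ?thesis by (rule UnionI)
  qed
  then show ?thesis unfolding interval_topology_def topology_generated_by_topspace by blast
qed

lemma sep:
  assumes "bicontinuous TYPE('a::order)" "\<not> (x::'a) \<le> y"
  shows "\<exists>a b c d. a \<lless> x \<and> x \<lless> c \<and> d \<lless> y \<and> y \<lless> b \<and> \<not> a \<le> b"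
proof -
  obtain a where a: "a \<lless> x" "\<not> a \<le> y" using C1[OF assms] by blast
  obtain b where b: "y \<lless> b" "\<not> a \<le> b" using C2[OF assms(1) a(2)] by blast
  obtain c where "x \<lless> c" using C2'[OF assms(1)] by blast
  moreover obtain d where "d \<lless> y" using C1'[OF assms(1)] by blast
  ultimately show ?thesis using a b by blast
qed

lemma up_closed:
  assumes "bicontinuous TYPE('a::order)"
  shows "closedin interval_topology {y::'a. s \<le> y}"
  unfolding closedin_def topspace_int[OF assms]
proof (intro conjI open_crit ballI)
  fix y assume "y \<in> UNIV - {y. s \<le> y}"
  then have "\<not> s \<le> y" by simp
  then obtain b where b: "y \<lless> b" "\<not> s \<le> b" using C2[OF assms] by blast
  obtain a where a: "a \<lless> y" using C1'[OF assms] by blast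
  have sub: "{z. a \<lless> z \<and> z \<lless> b} \<subseteq> UNIV - {y. s \<le> y}"
    using b(2) box_up by blast
  show "\<exists>a b. a \<lless> y \<and> y \<lless> b \<and> {z. a \<lless> z \<and> z \<lless> b} \<subseteq> UNIV - {y. s \<le> y}"
    by (intro exI[of _ a] exI[of _ b] conjI a b(1) sub)
qed simp

lemma down_closed:
  assumes "bicontinuous TYPE('a::order)"
  shows "closedin interval_topology {y::'a. y \<le> v}"
  unfolding closedin_def topspace_int[OF assms]
proof (intro conjI open_crit ballI)
  fix y assume "y \<in> UNIV - {y. y \<le> v}"
  then have "\<not> y \<le> v" by simp
  then obtain a where a: "a \<lless> y" "\<not> a \<le> v" using C1[OF assms] by blast
  obtain b where b: "y \<lless> b" using C2'[OF assms] by blast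
  have sub: "{z. a \<lless> z \<and> z \<lless> b} \<subseteq> UNIV - {y. y \<le> v}"
    using a(2) box_down by blast
  show "\<exists>a b. a \<lless> y \<and> y \<lless> b \<and> {z. a \<lless> z \<and> z \<lless> b} \<subseteq> UNIV - {y. y \<le> v}"
    by (intro exI[of _ a] exI[of _ b] conjI a(1) b sub)
qed simp

lemma uup_open:
  assumes "bicontinuous TYPE('a::order)"
  shows "openin interval_topology (uup (x::'a))"
proof (rule open_crit, rule ballI)
  fix y assume "y \<in> uup x"
  then have "x \<lless> y" by (simp add: uup_def)
  then obtain a where a: "x \<le> a" "a \<lless> y" using C3[OF assms] by blast
  obtain b where b: "y \<lless> b" using C2'[OF assms] by blast
  have sub: "{z. a \<lless> z \<and> z \<lless> b} \<subseteq> uup x"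
    using wb_mono_l[OF a(1)] by (auto simp: uup_def)
  show "\<exists>a b. a \<lless> y \<and> y \<lless> b \<and> {z. a \<lless> z \<and> z \<lless> b} \<subseteq> uup x"
    by (intro exI[of _ a] exI[of _ b] conjI a(2) b sub)
qed

lemma lawson_gen_open:
  assumes "bicontinuous TYPE('a::order)" "finite F"
  shows "openin interval_topology (uup (x::'a) - upset F)"
proof -
  have eq: "uup x - upset F = uup x \<inter> (\<Inter>f\<in>F. UNIV - {y. f \<le> y})"
    unfolding upset_def by auto
  have "openin interval_topology (\<Inter>f\<in>F. UNIV - {y. f \<le> y})"
  proof (cases "F = {}")
    case True then show ?thesis using topspace_int[OF assms(1)]
      by (metis INF_empty openin_topspace)
  next
    case False
    show ?thesis
    proof (rule openin_Inter)
      show "finite ((\<lambda>f. UNIV - {y. f \<le> y}) ` F)" using assms(2) by simp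
      show "(\<lambda>f. UNIV - {y. f \<le> y}) ` F \<noteq> {}" using False by simp
      show "\<And>T. T \<in> (\<lambda>f. UNIV - {y. f \<le> y}) ` F \<Longrightarrow> openin interval_topology T"
        using up_closed[OF assms(1)] topspace_int[OF assms(1)]
        by (auto simp: closedin_def)
    qed
  qed
  then show ?thesis unfolding eq using uup_open[OF assms(1)] by blast
qed

lemma directed_finite_ub:
  assumes "directed S" "finite F" "F \<subseteq> S"
  shows "\<exists>t\<in>S. \<forall>f\<in>F. f \<le> (t::'a::order)"
  using assms(2,3)
proof (induction F rule: finite_induct)
  case empty then show ?case using assms(1) unfolding directed_def by auto
next
  case (insert a F)
  then obtain t where t: "t \<in> S" "\<forall>f\<in>F. f \<le> t" by blast
  obtain z where z: "z \<in> S" "a \<le> z" "t \<le> z" using assms(1) t(1) insert(4) unfolding directed_def by blast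
  have "\<forall>f\<in>insert a F. f \<le> z"
  proof
    fix f assume "f \<in> insert a F"
    then consider "f = a" | "f \<in> F" by blast
    then show "f \<le> z"
    proof cases
      case 1 then show ?thesis using z by simp
    next
      case 2 then show ?thesis using t(2) z(3) order.trans by blast
    qed
  qed
  then show ?case using z(1) by blast
qed

lemma filtered_finite_lb:
  assumes "filtered S" "finite F" "F \<subseteq> S"
  shows "\<exists>t\<in>S. \<forall>f\<in>F. (t::'a::order) \<le> f"
  using assms(2,3)
proof (induction F rule: finite_induct)
  case empty then show ?case using assms(1) unfolding filtered_def by auto
next
  case (insert a F)
  then obtain t where t: "t \<in> S" "\<forall>f\<in>F. t \<le> f" by blast
  obtain z where z: "z \<in> S" "z \<le> a" "z \<le> t" using assms(1) t(1) insert(4) unfolding filtered_def by blast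
  have "\<forall>f\<in>insert a F. z \<le> f"
  proof
    fix f assume "f \<in> insert a F"
    then consider "f = a" | "f \<in> F" by blast
    then show "z \<le> f"
    proof cases
      case 1 then show ?thesis using z by simp
    next
      case 2 then show ?thesis using t(2) z(3) order.trans by blast
    qed
  qed
  then show ?case using z(1) by blast
qed



lemma sup_exists:
  assumes gh: "globally_hyperbolic TYPE('a::order)" and dS: "directed (S::'a set)"
    and ub: "\<forall>s\<in>S. s \<le> u"
  shows "\<exists>l. is_sup S l"
proof -
  have bc: "bicontinuous TYPE('a)" using gh by (rule gh_bc)
  obtain s0 where s0: "s0 \<in> S" using dS unfolding directed_def by blast
  let ?K = "{s0..u}"
  have K: "compactin interval_topology ?K" using gh by (rule gh_cpt)
  define f where "f = (\<lambda>(s::'a, b::bool). if b then {y. s \<le> y} else {y. y \<le> s})"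
  define A where "A = (S \<times> {True}) \<union> ({v. \<forall>s\<in>S. s \<le> v} \<times> {False})"
  have closed: "\<forall>C\<in>f ` A. closedin interval_topology C"
    using up_closed[OF bc] down_closed[OF bc] unfolding f_def by auto
  have fip: "\<forall>\<F>. finite \<F> \<and> \<F> \<subseteq> f ` A \<longrightarrow> ?K \<inter> \<Inter>\<F> \<noteq> {}"
  proof (intro allI impI)
    fix \<F> assume H: "finite \<F> \<and> \<F> \<subseteq> f ` A"
    then obtain C where C: "C \<subseteq> A" "finite C" "\<F> = f ` C"
      by (meson finite_subset_image)
    let ?F = "insert s0 (fst ` (C \<inter> (UNIV \<times> {True})))"
    have "finite ?F" using C(2) by simp
    moreover have "?F \<subseteq> S" using C(1) s0 unfolding A_def by auto
    ultimately obtain t where t: "t \<in> S" "\<forall>f\<in>?F. f \<le> t"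
      using directed_finite_ub[OF dS] by blast
    have "t \<in> ?K" using t ub by auto
    moreover have "t \<in> \<Inter>\<F>"
    proof
      fix X assume "X \<in> \<F>"
      then obtain p where p: "p \<in> C" "X = f p" using C(3) by blast
      obtain s b where sb: "p = (s, b)" by (cases p)
      show "t \<in> X"
      proof (cases b)
        case True
        then have "s \<in> ?F" using p sb by force
        then show ?thesis using t p sb True unfolding f_def by auto
      next
        case False
        then have "\<forall>s'\<in>S. s' \<le> s" using p sb C(1) unfolding A_def by auto
        then show ?thesis using t p sb False unfolding f_def by auto
      qed
    qed
    ultimately show "?K \<inter> \<Inter>\<F> \<noteq> {}" by blast
  qed
  have "?K \<inter> \<Inter>(f ` A) \<noteq> {}" using K closed fip unfolding compactin_fip by blast
  then obtain x where x: "x \<in> \<Inter>(f ` A)" by blast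
  have "\<forall>s\<in>S. s \<le> x"
  proof
    fix s assume "s \<in> S"
    then have "(s, True) \<in> A" unfolding A_def by auto
    then show "s \<le> x" using x unfolding f_def by force
  qed
  moreover have "\<forall>v. (\<forall>s\<in>S. s \<le> v) \<longrightarrow> x \<le> v"
  proof (intro allI impI)
    fix v assume "\<forall>s\<in>S. s \<le> v"
    then have "(v, False) \<in> A" unfolding A_def by auto
    then show "x \<le> v" using x unfolding f_def by force
  qed
  ultimately show ?thesis unfolding is_sup_def by blast
qed

lemma inf_exists:
  assumes gh: "globally_hyperbolic TYPE('a::order)" and dS: "filtered (S::'a set)"
    and lb: "\<forall>s\<in>S. u \<le> s"
  shows "\<exists>l. is_inf S l"
proof -
  have bc: "bicontinuous TYPE('a)" using gh by (rule gh_bc)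
  obtain s0 where s0: "s0 \<in> S" using dS unfolding filtered_def by blast
  let ?K = "{u..s0}"
  have K: "compactin interval_topology ?K" using gh by (rule gh_cpt)
  define f where "f = (\<lambda>(s::'a, b::bool). if b then {y. y \<le> s} else {y. s \<le> y})"
  define A where "A = (S \<times> {True}) \<union> ({v. \<forall>s\<in>S. v \<le> s} \<times> {False})"
  have closed: "\<forall>C\<in>f ` A. closedin interval_topology C"
    using up_closed[OF bc] down_closed[OF bc] unfolding f_def by auto
  have fip: "\<forall>\<F>. finite \<F> \<and> \<F> \<subseteq> f ` A \<longrightarrow> ?K \<inter> \<Inter>\<F> \<noteq> {}"
  proof (intro allI impI)
    fix \<F> assume H: "finite \<F> \<and> \<F> \<subseteq> f ` A"
    then obtain C where C: "C \<subseteq> A" "finite C" "\<F> = f ` C"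
      by (meson finite_subset_image)
    let ?F = "insert s0 (fst ` (C \<inter> (UNIV \<times> {True})))"
    have "finite ?F" using C(2) by simp
    moreover have "?F \<subseteq> S" using C(1) s0 unfolding A_def by auto
    ultimately obtain t where t: "t \<in> S" "\<forall>f\<in>?F. t \<le> f"
      using filtered_finite_lb[OF dS] by blast
    have "t \<in> ?K" using t lb by auto
    moreover have "t \<in> \<Inter>\<F>"
    proof
      fix X assume "X \<in> \<F>"
      then obtain p where p: "p \<in> C" "X = f p" using C(3) by blast
      obtain s b where sb: "p = (s, b)" by (cases p)
      show "t \<in> X"
      proof (cases b)
        case True
        then have "s \<in> ?F" using p sb by force
        then show ?thesis using t p sb True unfolding f_def by auto
      next
        case False
        then have "\<forall>s'\<in>S. s \<le> s'" using p sb C(1) unfolding A_def by auto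
        then show ?thesis using t p sb False unfolding f_def by auto
      qed
    qed
    ultimately show "?K \<inter> \<Inter>\<F> \<noteq> {}" by blast
  qed
  have "?K \<inter> \<Inter>(f ` A) \<noteq> {}" using K closed fip unfolding compactin_fip by blast
  then obtain x where x: "x \<in> \<Inter>(f ` A)" by blast
  have "\<forall>s\<in>S. x \<le> s"
  proof
    fix s assume "s \<in> S"
    then have "(s, True) \<in> A" unfolding A_def by auto
    then show "x \<le> s" using x unfolding f_def by force
  qed
  moreover have "\<forall>v. (\<forall>s\<in>S. v \<le> s) \<longrightarrow> v \<le> x"
  proof (intro allI impI)
    fix v assume "\<forall>s\<in>S. v \<le> s"
    then have "(v, False) \<in> A" unfolding A_def by auto
    then show "v \<le> x" using x unfolding f_def by force
  qed
  ultimately show ?thesis unfolding is_inf_def by blast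
qed


lemma lawson_sub:
  assumes bc: "bicontinuous TYPE('a::order)" and U: "openin (lawson_topology :: 'a topology) U"
  shows "openin interval_topology U"
proof -
  have g: "generate_topology_on {uup x - upset F | (x::'a) F. finite F} U"
    using U unfolding lawson_topology_def by (rule openin_topology_generated_by)
  show ?thesis
    by (rule generate_topology_on_coarsest[OF istopology_openin _ g])
       (use lawson_gen_open[OF bc] in blast)
qed

lemma hausdorff_int:
  assumes bc: "bicontinuous TYPE('a::order)"
  shows "Hausdorff_space (interval_topology :: 'a topology)"
  unfolding Hausdorff_space_def
proof (intro allI impI)
  fix x y :: 'a assume "x \<in> topspace interval_topology \<and> y \<in> topspace interval_topology \<and> x \<noteq> y"
  then have ne: "x \<noteq> y" by blast
  show "\<exists>U V. openin interval_topology U \<and> openin interval_topology V \<and> x \<in> U \<and> y \<in> V \<and> disjnt U V"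
  proof (cases "x \<le> y")
    case False
    then obtain a b c d where h: "a \<lless> x" "x \<lless> c" "d \<lless> y" "y \<lless> b" "\<not> a \<le> b"
      using sep[OF bc] by blast
    have "disjnt {z. a \<lless> z \<and> z \<lless> c} {z. d \<lless> z \<and> z \<lless> b}"
      unfolding disjnt_def using h(5) box_both by blast
    then show ?thesis
      by (intro exI[of _ "{z. a \<lless> z \<and> z \<lless> c}"] exI[of _ "{z. d \<lless> z \<and> z \<lless> b}"] conjI interval_open)
         (use h in auto)
  next
    case True
    then have "\<not> y \<le> x" using ne by auto
    then obtain a b c d where h: "a \<lless> y" "y \<lless> c" "d \<lless> x" "x \<lless> b" "\<not> a \<le> b"
      using sep[OF bc] by blast
    have "disjnt {z. d \<lless> z \<and> z \<lless> b} {z. a \<lless> z \<and> z \<lless> c}"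
      unfolding disjnt_def using h(5) box_both by blast
    then show ?thesis
      by (intro exI[of _ "{z. d \<lless> z \<and> z \<lless> b}"] exI[of _ "{z. a \<lless> z \<and> z \<lless> c}"] conjI interval_open)
         (use h in auto)
  qed
qed

lemma lc_int:
  assumes gh: "globally_hyperbolic TYPE('a::order)"
  shows "locally_compact_space (interval_topology :: 'a topology)"
  unfolding locally_compact_space_def
proof
  fix x :: 'a
  have bc: "bicontinuous TYPE('a)" using gh by (rule gh_bc)
  obtain a where a: "a \<lless> x" using C1'[OF bc] by blast
  obtain b where b: "x \<lless> b" using C2'[OF bc] by blast
  have "compactin interval_topology {a..b}" using gh by (rule gh_cpt)
  moreover have "{z. a \<lless> z \<and> z \<lless> b} \<subseteq> {a..b}" using wb_le by auto
  ultimately show "\<exists>U K. openin interval_topology U \<and> compactin interval_topology K \<and> x \<in> U \<and> U \<subseteq> K"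
    by (intro exI[of _ "{z. a \<lless> z \<and> z \<lless> b}"] exI[of _ "{a..b}"] conjI interval_open)
       (use a b in auto)
qed

lemma order_closed:
  assumes bc: "bicontinuous TYPE('a::order)"
  shows "closedin (prod_topology (interval_topology :: 'a topology) interval_topology) {(x, y). x \<le> y}"
  unfolding closedin_def topspace_prod_topology topspace_int[OF bc]
proof (intro conjI)
  show "{(x::'a, y). x \<le> y} \<subseteq> UNIV \<times> UNIV" by auto
  show "openin (prod_topology interval_topology interval_topology) (UNIV \<times> UNIV - {(x::'a, y). x \<le> y})"
    unfolding openin_subopen[of _ "UNIV \<times> UNIV - {(x::'a, y). x \<le> y}"]
  proof
    fix p assume "p \<in> UNIV \<times> UNIV - {(x::'a, y). x \<le> y}"
    then obtain x y where p: "p = (x, y)" "\<not> x \<le> y" by auto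
    then obtain a b c d where h: "a \<lless> x" "x \<lless> c" "d \<lless> y" "y \<lless> b" "\<not> a \<le> b"
      using sep[OF bc] by blast
    let ?T = "{z. a \<lless> z \<and> z \<lless> c} \<times> {z. d \<lless> z \<and> z \<lless> b}"
    have "openin (prod_topology interval_topology interval_topology) ?T"
      unfolding openin_prod_Times_iff using interval_open by blast
    moreover have "?T \<subseteq> UNIV \<times> UNIV - {(x::'a, y). x \<le> y}"
    proof (rule subsetI)
      fix q assume q: "q \<in> ?T"
      obtain u v where uv: "q = (u, v)" by (cases q)
      have "\<not> u \<le> v"
      proof
        assume "u \<le> v"
        moreover have "a \<lless> u" "v \<lless> b" using q uv by auto
        ultimately have "a \<le> b" using box_both by blast
        then show False using h(5) by blast
      qed
      then show "q \<in> UNIV \<times> UNIV - {(x::'a, y). x \<le> y}" using uv by simp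
    qed
    moreover have "p \<in> ?T" using p h by auto
    ultimately show "\<exists>T. openin (prod_topology interval_topology interval_topology) T \<and> p \<in> T \<and> T \<subseteq> UNIV \<times> UNIV - {(x::'a, y). x \<le> y}"
      by (intro exI[of _ ?T] conjI)
  qed
qed

theorem mainTheorem1:
  assumes "globally_hyperbolic TYPE('a::order)"
  shows "locally_compact_space (interval_topology :: 'a topology)
    \<and> Hausdorff_space (interval_topology :: 'a topology)
    \<and> (\<forall>U. openin (lawson_topology :: 'a topology) U \<longrightarrow> openin interval_topology U)
    \<and> closedin (prod_topology (interval_topology :: 'a topology) interval_topology) {(x, y). x \<le> y}
    \<and> (\<forall>S::'a set. directed S \<and> (\<exists>u. \<forall>s\<in>S. s \<le> u) \<longrightarrow> (\<exists>l. is_sup S l))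
    \<and> (\<forall>S::'a set. filtered S \<and> (\<exists>u. \<forall>s\<in>S. u \<le> s) \<longrightarrow> (\<exists>l. is_inf S l))"
proof -
  have bc: "bicontinuous TYPE('a)" using assms by (rule gh_bc)
  show ?thesis
    using lc_int[OF assms] hausdorff_int[OF bc] lawson_sub[OF bc] order_closed[OF bc]
      sup_exists[OF assms] inf_exists[OF assms] by blast
qed

end
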